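(* Consider the damped Newton's method, i.e. SGD with momentum $\mu\in[0,1)$ and preconditioning matrix $\Lambda:=\lambda A^{-1}$ ($\lambda>0$), on linear regression with label noise in the limit $N\to\infty$. Let $g:=2(1-\mu)-\left(\frac{1-\mu}{1+\mu}+\frac1S\right)\lambda$, and assume $g\neq0$ and $gS\neq\lambda D$. Then the model fluctuation is $$\Sigma=\frac{\lambda\sigma^2}{gS-\lambda D}A^{-1}.$$
   Context: Data: $x_i\in\mathbb{R}^D$ i.i.d. $\mathcal N(0,A)$, $A$ symmetric positive definite; $y_i=\mathbf{u}^{\mathrm T}x_i+\epsilon_i$ with $\epsilon_i$ i.i.d., independent of the $x_i$, mean $0$, variance $\sigma^2$; loss $\frac1{2N}\sum_i(\mathbf{w}^{\mathrm T}x_i-y_i)^2$, Hessian $H=A$; batch size $S$. Update: $\mathbf{m}_t=\mu\mathbf{m}_{t-1}+\hat{\mathbf{g}}_t$, $\mathbf{w}_t=\mathbf{w}_{t-1}-\Lambda\mathbf{m}_t$. The fluctuation $\Sigma:=\lim_t\mathbb{E}[(\mathbf{w}_t-\mathbf{u})(\mathbf{w}_t-\mathbf{u})^{\mathrm T}]$ satisfies $(1-\mu)(\Lambda H\Sigma+\Sigma H\Lambda)-\frac{1+\mu^2}{1-\mu^2}\Lambda H\Sigma H\Lambda+\frac{\mu}{1-\mu^2}(\Lambda H\Lambda H\Sigma+\Sigma H\Lambda H\Lambda)=\Lambda C\Lambda$ with $C=\frac1S(A\Sigma A+\mathrm{Tr}[A\Sigma]A+\sigma^2A)$. *)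

theory Defs
  imports "HOL-Analysis.Analysis"
begin

definition spd :: "real^'n^'n \<Rightarrow> bool" where
  "spd A \<longleftrightarrow> transpose A = A \<and> (\<forall>x. x \<noteq> 0 \<longrightarrow> x \<bullet> (A *v x) > 0)"

definition noise_cov :: "nat \<Rightarrow> real \<Rightarrow> real^'n^'n \<Rightarrow> real^'n^'n \<Rightarrow> real^'n^'n" where
  "noise_cov S \<sigma> A Sig =
     (1 / real S) *\<^sub>R (A ** Sig ** A + trace (A ** Sig) *\<^sub>R A + \<sigma>\<^sup>2 *\<^sub>R A)"

text \<open>The fluctuation equation characterising Sig for momentum mu, preconditioner L,
  Hessian H and noise covariance C.\<close>
definition fluct_eq :: "real \<Rightarrow> real^'n^'n \<Rightarrow> real^'n^'n \<Rightarrow> real^'n^'n \<Rightarrow> real^'n^'n \<Rightarrow> bool" where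
  "fluct_eq \<mu> L H C Sig \<longleftrightarrow>
     (1 - \<mu>) *\<^sub>R (L ** H ** Sig + Sig ** H ** L)
     - ((1 + \<mu>\<^sup>2) / (1 - \<mu>\<^sup>2)) *\<^sub>R (L ** H ** Sig ** H ** L)
     + (\<mu> / (1 - \<mu>\<^sup>2)) *\<^sub>R (L ** H ** L ** H ** Sig + Sig ** H ** L ** H ** L)
     = L ** C ** L"

end

theory Submission
  imports Defs
begin

lemma spd_invertible:
  fixes A :: "real^'n^'n"
  assumes "spd A" shows "invertible A"
proof -
  have "\<forall>x. A *v x = 0 \<longrightarrow> x = 0"
    using assms unfolding spd_def by (metis inner_zero_right less_irrefl)
  then show ?thesis
    by (simp add: invertible_left_inverse matrix_left_invertible_ker)
qed

lemma matrix_add_rdistrib': "((A::real^'m^'n) + B) ** C = A ** C + B ** C"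
  by (vector matrix_matrix_mult_def sum.distrib[symmetric] field_simps)

theorem proposition5:
  fixes A Sig :: "real^'n^'n" and \<mu> lam \<sigma> g :: real and S :: nat
  assumes "spd A"
    and "0 \<le> \<mu>" and "\<mu> < 1"
    and "lam > 0"
    and "S > 0"
    and "g = 2 * (1 - \<mu>) - ((1 - \<mu>) / (1 + \<mu>) + 1 / real S) * lam"
    and "g \<noteq> 0"
    and "g * real S \<noteq> lam * real CARD('n)"
    and "fluct_eq \<mu> (lam *\<^sub>R matrix_inv A) A (noise_cov S \<sigma> A Sig) Sig"
  shows "Sig = (lam * \<sigma>\<^sup>2 / (g * real S - lam * real CARD('n))) *\<^sub>R matrix_inv A"
proof -
  define Ai where "Ai = matrix_inv A"
  define L where "L = lam *\<^sub>R Ai"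
  define t where "t = trace (A ** Sig)"
  have inv: "invertible A" using assms(1) by (rule spd_invertible)
  have AiA: "Ai ** A = mat 1" and AAi: "A ** Ai = mat 1"
    using someI_ex[OF inv[unfolded invertible_def]] unfolding Ai_def matrix_inv_def by auto
  note sa = matrix_scalar_ac scalar_matrix_assoc[symmetric]
  have LA: "L ** A = lam *\<^sub>R mat 1" unfolding L_def
    by (simp add: sa AiA)
  have AL: "A ** L = lam *\<^sub>R mat 1" unfolding L_def
    by (simp add: sa AAi)
  have sm: "\<And>c (X::real^'n^'n). (c *\<^sub>R mat 1) ** X = c *\<^sub>R X"
    by (simp add: sa)
  have ms: "\<And>c (X::real^'n^'n). X ** (c *\<^sub>R mat 1) = c *\<^sub>R X"
    by (simp add: sa)
  have t1: "L ** A ** Sig = lam *\<^sub>R Sig" using LA sm by simp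
  have t2: "Sig ** A ** L = lam *\<^sub>R Sig" using AL ms by (simp add: matrix_mul_assoc[symmetric])
  have t3: "L ** A ** Sig ** A ** L = lam\<^sup>2 *\<^sub>R Sig"
    using t1 AL ms by (simp add: matrix_mul_assoc[symmetric] scalar_matrix_assoc[symmetric] power2_eq_square)
  have t4: "L ** A ** L ** A ** Sig = lam\<^sup>2 *\<^sub>R Sig"
    using LA sm by (simp add: scalar_matrix_assoc[symmetric] power2_eq_square)
  have t5: "Sig ** A ** L ** A ** L = lam\<^sup>2 *\<^sub>R Sig"
    using t2 AL ms by (simp add: matrix_mul_assoc[symmetric] scalar_matrix_assoc[symmetric] power2_eq_square)
  have t6: "L ** (A ** Sig ** A) ** L = lam\<^sup>2 *\<^sub>R Sig"
    using t3 by (simp add: matrix_mul_assoc)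
  have t7: "L ** A ** L = lam *\<^sub>R L"
    using LA sm by simp
  have t8: "L ** noise_cov S \<sigma> A Sig ** L
      = (1 / real S) *\<^sub>R (lam\<^sup>2 *\<^sub>R Sig + (t + \<sigma>\<^sup>2) *\<^sub>R (lam *\<^sub>R L))"
    unfolding noise_cov_def t_def[symmetric]
    using t6 t7
    by (simp add: matrix_add_ldistrib matrix_add_rdistrib' matrix_scalar_ac scalar_matrix_assoc[symmetric]
        scaleR_add_left) (simp add: algebra_simps)
  define a where "a = (1 + \<mu>\<^sup>2) / (1 - \<mu>\<^sup>2)"
  define b where "b = \<mu> / (1 - \<mu>\<^sup>2)"
  define k where "k = (1 - \<mu>) * 2 * lam - a * lam\<^sup>2 + b * 2 * lam\<^sup>2"
  define q where "q = (t + \<sigma>\<^sup>2) * lam\<^sup>2 / real S"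
  have eq0: "(1 - \<mu>) *\<^sub>R (lam *\<^sub>R Sig + lam *\<^sub>R Sig) - a *\<^sub>R (lam\<^sup>2 *\<^sub>R Sig)
      + b *\<^sub>R (lam\<^sup>2 *\<^sub>R Sig + lam\<^sup>2 *\<^sub>R Sig)
      = (1 / real S) *\<^sub>R (lam\<^sup>2 *\<^sub>R Sig + (t + \<sigma>\<^sup>2) *\<^sub>R (lam *\<^sub>R L))"
    using assms(9) unfolding fluct_eq_def a_def[symmetric] b_def[symmetric] L_def[symmetric] Ai_def[symmetric]
    using t1 t2 t3 t4 t5 t8 by simp
  have eq1: "k *\<^sub>R Sig = (lam\<^sup>2 / real S) *\<^sub>R Sig + q *\<^sub>R Ai"
  proof -
    have "k *\<^sub>R Sig = (1 - \<mu>) *\<^sub>R (lam *\<^sub>R Sig + lam *\<^sub>R Sig) - a *\<^sub>R (lam\<^sup>2 *\<^sub>R Sig)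
      + b *\<^sub>R (lam\<^sup>2 *\<^sub>R Sig + lam\<^sup>2 *\<^sub>R Sig)"
    proof -
      have "(1 - \<mu>) *\<^sub>R (lam *\<^sub>R Sig + lam *\<^sub>R Sig) - a *\<^sub>R (lam\<^sup>2 *\<^sub>R Sig)
      + b *\<^sub>R (lam\<^sup>2 *\<^sub>R Sig + lam\<^sup>2 *\<^sub>R Sig) = ((1 - \<mu>) * 2 * lam - a * lam\<^sup>2 + b * 2 * lam\<^sup>2) *\<^sub>R Sig"
        by (simp only: scaleR_2[symmetric] scaleR_scaleR flip: scaleR_diff_left scaleR_add_left)
           (simp add: mult_ac)
      thus ?thesis unfolding k_def by simp
    qed
    also have "\<dots> = (lam\<^sup>2 / real S) *\<^sub>R Sig + q *\<^sub>R Ai"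
      unfolding eq0 q_def L_def by (simp add: algebra_simps power2_eq_square) (simp add: add_divide_distrib scaleR_add_left)
    finally show ?thesis .
  qed
  have mu1: "1 - \<mu>\<^sup>2 \<noteq> 0" "1 + \<mu> \<noteq> 0"
  proof -
    have "\<mu> * \<mu> \<le> \<mu>" using assms(2,3) by (simp add: mult_left_le_one_le)
    thus "1 - \<mu>\<^sup>2 \<noteq> 0" "1 + \<mu> \<noteq> 0" using assms(2,3) by (simp_all add: power2_eq_square)
  qed
  have kg: "k - lam\<^sup>2 / real S = lam * g"
  proof -
    have m1: "1 - \<mu> \<noteq> 0" using assms(3) by simp
    have "a - 2 * b = (1 - \<mu>) * (1 - \<mu>) / ((1 - \<mu>) * (1 + \<mu>))"
      unfolding a_def b_def using mu1 by (simp add: power2_eq_square diff_divide_distrib[symmetric] algebra_simps)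
    also have "\<dots> = (1 - \<mu>) / (1 + \<mu>)" using m1 by simp
    finally have ab: "a - 2 * b = (1 - \<mu>) / (1 + \<mu>)" .
    have "k - lam\<^sup>2 / real S = (1 - \<mu>) * 2 * lam - (a - 2 * b) * lam\<^sup>2 - lam\<^sup>2 / real S"
      unfolding k_def by (simp add: algebra_simps)
    also have "\<dots> = lam * g" unfolding ab assms(6) by (simp add: algebra_simps power2_eq_square)
    finally show ?thesis .
  qed
  have "(lam * g) *\<^sub>R Sig = q *\<^sub>R Ai"
    using eq1 unfolding kg[symmetric] by (simp add: algebra_simps)
  hence SigE: "Sig = (q / (lam * g)) *\<^sub>R Ai"
  proof -
    assume h: "(lam * g) *\<^sub>R Sig = q *\<^sub>R Ai"
    have "lam * g \<noteq> 0" using assms(4,7) by simp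
    hence "Sig = (1 / (lam * g)) *\<^sub>R ((lam * g) *\<^sub>R Sig)" by simp
    also have "\<dots> = (q / (lam * g)) *\<^sub>R Ai" unfolding h by simp
    finally show ?thesis .
  qed
  define c where "c = q / (lam * g)"
  have tc: "t = c * real CARD('n)"
    unfolding t_def SigE c_def[symmetric] by (simp add: sa AAi trace_def mat_def)
  have "c * (g * real S) = lam * (t + \<sigma>\<^sup>2)"
    unfolding c_def q_def using assms(4,5,7) by (simp add: field_simps power2_eq_square)
  hence "c * (g * real S - lam * real CARD('n)) = lam * \<sigma>\<^sup>2"
    unfolding tc by (simp add: algebra_simps)
  hence "c = lam * \<sigma>\<^sup>2 / (g * real S - lam * real CARD('n))"
    using assms(8) by (simp add: field_simps)
  thus ?thesis using SigE c_def Ai_def by simp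
qed

end
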